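(* Every finite lattice $S$ is isomorphic to the skeleton $S(D)$ of some finite distributive lattice $D$.
   Context: For a modular lattice $M$ of finite length, an interval $[a,b]$ is \emph{atomistic} if every element of it is a join of atoms of $[a,b]$ (elements covering $a$); the \emph{skeleton} $S(M)$ is the set of least elements of the maximal (under inclusion) atomistic intervals of $M$, ordered as in $M$ (it is a lattice). *)

theory Defs
  imports Main
begin

definition partial_order_on' :: "'b set \<Rightarrow> ('b \<Rightarrow> 'b \<Rightarrow> bool) \<Rightarrow> bool" where
  "partial_order_on' D le \<longleftrightarrow>
     (\<forall>x\<in>D. le x x) \<and>
     (\<forall>x\<in>D. \<forall>y\<in>D. le x y \<and> le y x \<longrightarrow> x = y) \<and>
     (\<forall>x\<in>D. \<forall>y\<in>D. \<forall>z\<in>D. le x y \<and> le y z \<longrightarrow> le x z)"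

definition is_lub_in :: "'b set \<Rightarrow> ('b \<Rightarrow> 'b \<Rightarrow> bool) \<Rightarrow> 'b set \<Rightarrow> 'b \<Rightarrow> bool" where
  "is_lub_in C le A z \<longleftrightarrow> z \<in> C \<and> (\<forall>a\<in>A. le a z) \<and> (\<forall>w\<in>C. (\<forall>a\<in>A. le a w) \<longrightarrow> le z w)"

definition is_glb_in :: "'b set \<Rightarrow> ('b \<Rightarrow> 'b \<Rightarrow> bool) \<Rightarrow> 'b set \<Rightarrow> 'b \<Rightarrow> bool" where
  "is_glb_in C le A z \<longleftrightarrow> z \<in> C \<and> (\<forall>a\<in>A. le z a) \<and> (\<forall>w\<in>C. (\<forall>a\<in>A. le w a) \<longrightarrow> le w z)"

definition lattice_on :: "'b set \<Rightarrow> ('b \<Rightarrow> 'b \<Rightarrow> bool) \<Rightarrow> bool" where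
  "lattice_on D le \<longleftrightarrow> D \<noteq> {} \<and> partial_order_on' D le \<and>
     (\<forall>x\<in>D. \<forall>y\<in>D. (\<exists>z. is_lub_in D le {x, y} z) \<and> (\<exists>z. is_glb_in D le {x, y} z))"

definition join_on :: "'b set \<Rightarrow> ('b \<Rightarrow> 'b \<Rightarrow> bool) \<Rightarrow> 'b \<Rightarrow> 'b \<Rightarrow> 'b" where
  "join_on D le x y = (THE z. is_lub_in D le {x, y} z)"

definition meet_on :: "'b set \<Rightarrow> ('b \<Rightarrow> 'b \<Rightarrow> bool) \<Rightarrow> 'b \<Rightarrow> 'b \<Rightarrow> 'b" where
  "meet_on D le x y = (THE z. is_glb_in D le {x, y} z)"

definition distributive_lattice_on :: "'b set \<Rightarrow> ('b \<Rightarrow> 'b \<Rightarrow> bool) \<Rightarrow> bool" where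
  "distributive_lattice_on D le \<longleftrightarrow> lattice_on D le \<and>
     (\<forall>x\<in>D. \<forall>y\<in>D. \<forall>z\<in>D.
        meet_on D le x (join_on D le y z) = join_on D le (meet_on D le x y) (meet_on D le x z))"

definition interval_on :: "'b set \<Rightarrow> ('b \<Rightarrow> 'b \<Rightarrow> bool) \<Rightarrow> 'b \<Rightarrow> 'b \<Rightarrow> 'b set" where
  "interval_on D le a b = {x \<in> D. le a x \<and> le x b}"

definition covers_on :: "'b set \<Rightarrow> ('b \<Rightarrow> 'b \<Rightarrow> bool) \<Rightarrow> 'b \<Rightarrow> 'b \<Rightarrow> bool" where
  "covers_on D le a c \<longleftrightarrow> a \<in> D \<and> c \<in> D \<and> le a c \<and> a \<noteq> c \<and>
     (\<forall>x\<in>D. le a x \<and> le x c \<longrightarrow> x = a \<or> x = c)"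

definition interval_atoms :: "'b set \<Rightarrow> ('b \<Rightarrow> 'b \<Rightarrow> bool) \<Rightarrow> 'b \<Rightarrow> 'b \<Rightarrow> 'b set" where
  "interval_atoms D le a b = {c \<in> interval_on D le a b. covers_on D le a c}"

text \<open>[a,b] (with a \<le> b) is atomistic: every element is a join (in [a,b], equivalently in D)
  of a set of atoms of [a,b] (the empty join being a)\<close>
definition atomistic_interval :: "'b set \<Rightarrow> ('b \<Rightarrow> 'b \<Rightarrow> bool) \<Rightarrow> 'b \<Rightarrow> 'b \<Rightarrow> bool" where
  "atomistic_interval D le a b \<longleftrightarrow> a \<in> D \<and> b \<in> D \<and> le a b \<and>
     (\<forall>x\<in>interval_on D le a b. \<exists>A \<subseteq> interval_atoms D le a b.
        is_lub_in (interval_on D le a b) le A x)"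

definition maximal_atomistic_interval :: "'b set \<Rightarrow> ('b \<Rightarrow> 'b \<Rightarrow> bool) \<Rightarrow> 'b \<Rightarrow> 'b \<Rightarrow> bool" where
  "maximal_atomistic_interval D le a b \<longleftrightarrow> atomistic_interval D le a b \<and>
     (\<forall>c d. atomistic_interval D le c d \<and> interval_on D le a b \<subseteq> interval_on D le c d
        \<longrightarrow> interval_on D le a b = interval_on D le c d)"

definition skeleton :: "'b set \<Rightarrow> ('b \<Rightarrow> 'b \<Rightarrow> bool) \<Rightarrow> 'b set" where
  "skeleton D le = {a. \<exists>b. maximal_atomistic_interval D le a b}"

end

theory Submission
  imports Defs "HOL-Library.Nat_Bijection"
begin

abbreviation dec :: "nat \<Rightarrow> nat set" where "dec \<equiv> set_decode"
abbreviation enc :: "nat set \<Rightarrow> nat" where "enc \<equiv> set_encode"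

lemma dec_inj: "dec x = dec y \<Longrightarrow> x = y"
  by (metis set_decode_inverse)

lemma sub_ins: "A \<subseteq> Z \<Longrightarrow> Z \<subseteq> insert p A \<Longrightarrow> Z = A \<or> Z = insert p A"
  by (cases "p \<in> Z") auto

declare set_encode_insert[simp del]

definition DDof :: "nat set set \<Rightarrow> nat set" where "DDof DS = {n. dec n \<in> DS}"
definition LE :: "nat \<Rightarrow> nat \<Rightarrow> bool" where "LE x y \<longleftrightarrow> dec x \<subseteq> dec y"

locale dsfam =
  fixes DS :: "nat set set"
  assumes fin: "finite DS"
    and fin_el: "X \<in> DS \<Longrightarrow> finite X"
    and emp: "{} \<in> DS"
    and un: "X \<in> DS \<Longrightarrow> Y \<in> DS \<Longrightarrow> X \<union> Y \<in> DS"
    and int: "X \<in> DS \<Longrightarrow> Y \<in> DS \<Longrightarrow> X \<inter> Y \<in> DS"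
    and ext: "C \<in> DS \<Longrightarrow> E \<in> DS \<Longrightarrow> C \<subset> E \<Longrightarrow> \<exists>q\<in>E - C. insert q C \<in> DS"
begin

abbreviation "D \<equiv> DDof DS"

lemma inD: "x \<in> D \<longleftrightarrow> dec x \<in> DS" by (simp add: DDof_def)
lemma enc_inD: "X \<in> DS \<Longrightarrow> enc X \<in> D" using fin_el by (simp add: inD)
lemma dec_enc: "X \<in> DS \<Longrightarrow> dec (enc X) = X" using fin_el by simp

lemma finD: "finite D"
proof -
  have "D \<subseteq> enc ` DS" by (auto simp: inD) (metis image_eqI set_decode_inverse)
  thus ?thesis using fin finite_subset by blast
qed

lemma lub: "x \<in> D \<Longrightarrow> y \<in> D \<Longrightarrow> is_lub_in D LE {x,y} (enc (dec x \<union> dec y))"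
  unfolding is_lub_in_def LE_def using un[of "dec x" "dec y"] by (auto simp: inD)

lemma glb: "x \<in> D \<Longrightarrow> y \<in> D \<Longrightarrow> is_glb_in D LE {x,y} (enc (dec x \<inter> dec y))"
  unfolding is_glb_in_def LE_def using int[of "dec x" "dec y"] by (auto simp: inD)

lemma join_eq: "x \<in> D \<Longrightarrow> y \<in> D \<Longrightarrow> join_on D LE x y = enc (dec x \<union> dec y)"
  unfolding join_on_def
proof (rule the_equality)
  assume "x \<in> D" "y \<in> D"
  thus "is_lub_in D LE {x,y} (enc (dec x \<union> dec y))" by (rule lub)
  fix z assume z: "is_lub_in D LE {x, y} z"
  have l: "is_lub_in D LE {x,y} (enc (dec x \<union> dec y))" using \<open>x\<in>D\<close> \<open>y\<in>D\<close> by (rule lub)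
  have "LE z (enc (dec x \<union> dec y))" "LE (enc (dec x \<union> dec y)) z"
    using z l unfolding is_lub_in_def by auto
  thus "z = enc (dec x \<union> dec y)" unfolding LE_def using dec_inj by blast
qed

lemma meet_eq: "x \<in> D \<Longrightarrow> y \<in> D \<Longrightarrow> meet_on D LE x y = enc (dec x \<inter> dec y)"
  unfolding meet_on_def
proof (rule the_equality)
  assume "x \<in> D" "y \<in> D"
  thus "is_glb_in D LE {x,y} (enc (dec x \<inter> dec y))" by (rule glb)
  fix z assume z: "is_glb_in D LE {x, y} z"
  have l: "is_glb_in D LE {x,y} (enc (dec x \<inter> dec y))" using \<open>x\<in>D\<close> \<open>y\<in>D\<close> by (rule glb)
  have "LE z (enc (dec x \<inter> dec y))" "LE (enc (dec x \<inter> dec y)) z"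
    using z l unfolding is_glb_in_def by auto
  thus "z = enc (dec x \<inter> dec y)" unfolding LE_def using dec_inj by blast
qed

lemma distrib: "distributive_lattice_on D LE"
proof -
  have "0 \<in> D" using emp by (simp add: inD)
  moreover have "partial_order_on' D LE"
    unfolding partial_order_on'_def LE_def using dec_inj by blast
  moreover have "\<forall>x\<in>D. \<forall>y\<in>D. (\<exists>z. is_lub_in D LE {x, y} z) \<and> (\<exists>z. is_glb_in D LE {x, y} z)"
    using lub glb by blast
  ultimately have L: "lattice_on D LE" unfolding lattice_on_def by blast
  have "meet_on D LE x (join_on D LE y z) = join_on D LE (meet_on D LE x y) (meet_on D LE x z)"
    if "x \<in> D" "y \<in> D" "z \<in> D" for x y z
  proof -
    have j: "enc (dec y \<union> dec z) \<in> D" "enc (dec x \<inter> dec y) \<in> D" "enc (dec x \<inter> dec z) \<in> D"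
      using that un int by (auto simp: inD)
    show ?thesis using that j
      by (simp add: join_eq meet_eq Int_Un_distrib)
  qed
  thus ?thesis using L unfolding distributive_lattice_on_def by blast
qed

lemma interval_iff: "x \<in> interval_on D LE a b \<longleftrightarrow> x \<in> D \<and> dec a \<subseteq> dec x \<and> dec x \<subseteq> dec b"
  by (simp add: interval_on_def LE_def)

lemma fin_union: "finite F \<Longrightarrow> F \<subseteq> DS \<Longrightarrow> X \<in> DS \<Longrightarrow> X \<union> \<Union>F \<in> DS"
proof (induction F rule: finite_induct)
  case empty thus ?case by simp
next
  case (insert Y F)
  have "X \<union> \<Union>(insert Y F) = Y \<union> (X \<union> \<Union>F)" by auto
  thus ?case using insert un by auto
qed

lemma atom_char:
  assumes a: "a \<in> D" and b: "b \<in> D" and ab: "dec a \<subseteq> dec b"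
  shows "atomistic_interval D LE a b \<longleftrightarrow> (\<forall>p \<in> dec b - dec a. insert p (dec a) \<in> DS)"
proof
  assume H: "\<forall>p\<in>dec b - dec a. insert p (dec a) \<in> DS"
  show "atomistic_interval D LE a b"
    unfolding atomistic_interval_def
  proof (intro conjI ballI)
    show "a\<in>D" "b\<in>D" "LE a b" using a b ab by (auto simp: LE_def)
    fix x assume x: "x \<in> interval_on D LE a b"
    hence xD: "x\<in>D" and ax: "dec a \<subseteq> dec x" and xb: "dec x \<subseteq> dec b" by (auto simp: interval_iff)
    let ?A = "(\<lambda>p. enc (insert p (dec a))) ` (dec x - dec a)"
    have "?A \<subseteq> interval_atoms D LE a b"
    proof
      fix c assume "c \<in> ?A" then obtain p where p: "p \<in> dec x - dec a"
        and c: "c = enc (insert p (dec a))" by auto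
      have ins: "insert p (dec a) \<in> DS" using H p xb by auto
      have dc: "dec c = insert p (dec a)" using c ins dec_enc by simp
      have cD: "c \<in> D" using ins c enc_inD by simp
      have cov: "\<forall>z\<in>D. LE a z \<and> LE z c \<longrightarrow> z = a \<or> z = c"
      proof (intro ballI impI)
        fix z assume "z\<in>D" "LE a z \<and> LE z c"
        hence "dec a \<subseteq> dec z" "dec z \<subseteq> insert p (dec a)" using dc by (auto simp: LE_def)
        hence "dec z = dec a \<or> dec z = dec c" using dc sub_ins by metis
        thus "z = a \<or> z = c" using dec_inj by blast
      qed
      have "a \<noteq> c" using dc p by auto
      thus "c \<in> interval_atoms D LE a b"
        unfolding interval_atoms_def covers_on_def using cov a cD dc p xb ab
        by (auto simp: interval_iff LE_def)
    qed
    moreover have "is_lub_in (interval_on D LE a b) LE ?A x"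
      unfolding is_lub_in_def
    proof (intro conjI ballI impI)
      show "x \<in> interval_on D LE a b" by (rule x)
      fix c assume "c \<in> ?A"
      then obtain p where p: "p \<in> dec x - dec a" and c: "c = enc (insert p (dec a))" by auto
      have ins: "insert p (dec a) \<in> DS" using H p xb by auto
      show "LE c x" using c ins dec_enc p ax by (simp add: LE_def)
    next
      fix w assume w: "w \<in> interval_on D LE a b" and all: "\<forall>c\<in>?A. LE c w"
      show "LE x w" unfolding LE_def
      proof
        fix q assume q: "q \<in> dec x"
        show "q \<in> dec w"
        proof (cases "q \<in> dec a")
          case True thus ?thesis using w by (auto simp: interval_iff)
        next
          case False
          have ins: "insert q (dec a) \<in> DS" using H q xb False by auto
          have "LE (enc (insert q (dec a))) w" using all q False by auto
          thus ?thesis using ins dec_enc by (simp add: LE_def)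
        qed
      qed
    qed
    ultimately show "\<exists>A\<subseteq>interval_atoms D LE a b. is_lub_in (interval_on D LE a b) LE A x" by blast
  qed
next
  assume At: "atomistic_interval D LE a b"
  show "\<forall>p\<in>dec b - dec a. insert p (dec a) \<in> DS"
  proof
    fix p assume p: "p \<in> dec b - dec a"
    have "b \<in> interval_on D LE a b" using b ab by (simp add: interval_iff)
    then obtain Aset where As: "Aset \<subseteq> interval_atoms D LE a b"
      and lubb: "is_lub_in (interval_on D LE a b) LE Aset b"
      using At unfolding atomistic_interval_def by blast
    have AsD: "Aset \<subseteq> D" using As by (auto simp: interval_atoms_def interval_iff)
    have finA: "finite Aset" using AsD finD finite_subset by blast
    let ?W = "dec a \<union> \<Union>(dec ` Aset)"
    have dAs: "dec ` Aset \<subseteq> DS" using AsD by (auto simp: inD)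
    have WDS: "?W \<in> DS" using fin_union[OF _ dAs, of "dec a"] finA a by (auto simp: inD)
    have Wb: "\<Union>(dec ` Aset) \<subseteq> dec b" using As by (auto simp: interval_atoms_def interval_iff)
    have "enc ?W \<in> interval_on D LE a b" using WDS dec_enc enc_inD Wb ab by (simp add: interval_iff)
    moreover have "\<forall>c\<in>Aset. LE c (enc ?W)" using WDS dec_enc by (auto simp: LE_def)
    ultimately have "LE b (enc ?W)" using lubb unfolding is_lub_in_def by blast
    hence "p \<in> ?W" using p WDS dec_enc by (auto simp: LE_def)
    then obtain c where cA: "c \<in> Aset" and pc: "p \<in> dec c" using p by auto
    have cov: "covers_on D LE a c" using cA As by (auto simp: interval_atoms_def)
    hence cD: "c \<in> D" and ac: "dec a \<subseteq> dec c" and anc: "a \<noteq> c"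
      and bet: "\<forall>z\<in>D. LE a z \<and> LE z c \<longrightarrow> z = a \<or> z = c"
      unfolding covers_on_def LE_def by auto
    have ss: "dec a \<subset> dec c" using ac anc dec_inj by blast
    have "\<exists>q\<in>dec c - dec a. insert q (dec a) \<in> DS"
      using ext[OF _ _ ss] a cD by (simp add: inD)
    then obtain q where q: "q \<in> dec c - dec a" and qi: "insert q (dec a) \<in> DS" by blast
    let ?z = "enc (insert q (dec a))"
    have dz: "dec ?z = insert q (dec a)" using qi dec_enc by simp
    have "?z \<in> D" using qi enc_inD by simp
    moreover have "LE a ?z" "LE ?z c" using dz q ac by (auto simp: LE_def)
    ultimately have "?z = a \<or> ?z = c" using bet by blast
    moreover have "?z \<noteq> a" proof assume "?z = a" hence "dec ?z = dec a" by simp thus False using dz q by auto qed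
    ultimately have "?z = c" by blast
    hence "dec c = insert q (dec a)" using dz by simp
    hence "p = q" using pc p by auto
    thus "insert p (dec a) \<in> DS" using qi by simp
  qed
qed

end


definition xp :: "('a \<Rightarrow> nat) \<Rightarrow> 'a \<Rightarrow> nat" where "xp e t = 2 * e t"
definition gp :: "('a \<Rightarrow> nat) \<Rightarrow> 'a \<Rightarrow> nat" where "gp e s = Suc (2 * e s)"
definition U :: "'a::order \<Rightarrow> 'a set" where "U s = {t. \<not> s \<le> t}"
definition DSc :: "('a::order \<Rightarrow> nat) \<Rightarrow> nat set set" where
  "DSc e = {X. X \<subseteq> range (xp e) \<union> range (gp e) \<and> (\<forall>s t. gp e s \<in> X \<and> \<not> s \<le> t \<longrightarrow> xp e t \<in> X)}"

lemma xp_gp_neq[simp]: "xp e t \<noteq> gp e s" "gp e s \<noteq> xp e t"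
  unfolding xp_def gp_def by presburger+

lemma xp_eq[simp]: "inj e \<Longrightarrow> xp e t = xp e u \<longleftrightarrow> t = u"
  unfolding xp_def by (auto dest: injD)
lemma gp_eq[simp]: "inj e \<Longrightarrow> gp e t = gp e u \<longleftrightarrow> t = u"
  unfolding gp_def by (auto dest: injD)

lemma DSc_iff: "X \<in> DSc e \<longleftrightarrow> X \<subseteq> range (xp e) \<union> range (gp e) \<and> (\<forall>s t. gp e s \<in> X \<and> \<not> s \<le> t \<longrightarrow> xp e t \<in> X)"
  by (simp add: DSc_def)

lemma dsfam_DSc:
  fixes e :: "'a::{finite,order} \<Rightarrow> nat"
  shows "dsfam (DSc e)"
proof
  have "DSc e \<subseteq> Pow (range (xp e) \<union> range (gp e))" by (auto simp: DSc_iff)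
  thus "finite (DSc e)" by (rule finite_subset) simp
  fix X assume "X \<in> DSc e"
  thus "finite X" by (auto simp: DSc_iff intro: finite_subset)
next
  show "{} \<in> DSc e" by (simp add: DSc_iff)
next
  fix X Y assume "X \<in> DSc e" "Y \<in> DSc e"
  thus "X \<union> Y \<in> DSc e" "X \<inter> Y \<in> DSc e" by (auto simp: DSc_iff)
next
  fix C E assume C: "C \<in> DSc e" and E: "E \<in> DSc e" and CE: "C \<subset> E"
  show "\<exists>q\<in>E - C. insert q C \<in> DSc e"
  proof (cases "\<exists>t. xp e t \<in> E - C")
    case True
    then obtain t where t: "xp e t \<in> E - C" by blast
    have "insert (xp e t) C \<in> DSc e" using C by (auto simp: DSc_iff)
    thus ?thesis using t by blast
  next
    case False
    obtain q where q: "q \<in> E - C" using CE by blast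
    have "insert q C \<in> DSc e"
      unfolding DSc_iff
    proof (intro conjI allI impI)
      show "insert q C \<subseteq> range (xp e) \<union> range (gp e)" using q C E by (auto simp: DSc_iff)
      fix s t assume st: "gp e s \<in> insert q C \<and> \<not> s \<le> t"
      show "xp e t \<in> insert q C"
      proof (cases "gp e s \<in> C")
        case True thus ?thesis using C st by (auto simp: DSc_iff)
      next
        case False
        hence "gp e s \<in> E" using st q by auto
        hence "xp e t \<in> E" using E st by (auto simp: DSc_iff)
        thus ?thesis using \<open>\<not> (\<exists>t. xp e t \<in> E - C)\<close> by auto
      qed
    qed
    thus ?thesis using q by blast
  qed
qed

lemma U_le: "U (x::'a::order) \<subseteq> U y \<longleftrightarrow> x \<le> y"
  unfolding U_def using order_trans by auto

lemma key:
  fixes e :: "'a::{finite,lattice} \<Rightarrow> nat"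
  assumes inj: "inj e"
  shows "skeleton (DDof (DSc e)) LE = range (\<lambda>s. enc (xp e ` U s))"
proof -
  interpret dsfam "DSc e" by (rule dsfam_DSc)
  have finX: "finite (X :: nat set)" if "X \<in> DSc e" for X using that fin_el by blast
  show ?thesis
  proof (intro equalityI subsetI)
    fix a assume "a \<in> skeleton D LE"
    then obtain b where M: "maximal_atomistic_interval D LE a b" unfolding skeleton_def by blast
    hence At: "atomistic_interval D LE a b"
      and Mx: "\<And>c d. atomistic_interval D LE c d \<Longrightarrow> interval_on D LE a b \<subseteq> interval_on D LE c d
        \<Longrightarrow> interval_on D LE a b = interval_on D LE c d"
      unfolding maximal_atomistic_interval_def by blast+
    have aD: "a \<in> D" and bD: "b \<in> D" and ab: "dec a \<subseteq> dec b"
      using At unfolding atomistic_interval_def LE_def by auto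
    have H: "\<forall>p\<in>dec b - dec a. insert p (dec a) \<in> DSc e" using atom_char aD bD ab At by blast
    have A: "dec a \<in> DSc e" using aD inD by blast
    have shrink: False if C: "C \<in> DSc e" and Ca: "C \<subseteq> dec a" and Cne: "C \<noteq> dec a"
      and HC: "\<forall>p \<in> dec b - C. insert p C \<in> DSc e" for C
    proof -
      have cD: "enc C \<in> D" using C enc_inD by blast
      have dc: "dec (enc C) = C" using C dec_enc by blast
      have "atomistic_interval D LE (enc C) b"
        using atom_char[OF cD bD] dc HC Ca ab by auto
      moreover have "interval_on D LE a b \<subseteq> interval_on D LE (enc C) b"
      proof
        fix x assume "x \<in> interval_on D LE a b"
        hence x: "x \<in> D" "dec a \<subseteq> dec x" "dec x \<subseteq> dec b" by (auto simp: interval_iff)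
        have "C \<subseteq> dec x" using Ca x(2) by (rule subset_trans)
        thus "x \<in> interval_on D LE (enc C) b" using x dc by (simp add: interval_iff)
      qed
      ultimately have "interval_on D LE a b = interval_on D LE (enc C) b" using Mx by blast
      moreover have "enc C \<in> interval_on D LE (enc C) b" using cD dc Ca ab by (auto simp: interval_iff)
      ultimately have "enc C \<in> interval_on D LE a b" by simp
      hence "dec a \<subseteq> C" using dc by (auto simp: interval_iff)
      thus False using Ca Cne by blast
    qed
    have nog: "gp e r \<notin> dec a" for r
    proof
      assume g: "gp e r \<in> dec a"
      let ?C = "dec a - {gp e r}"
      have rem: "X - {gp e r} \<in> DSc e" if "X \<in> DSc e" for X
        using that by (auto simp: DSc_iff)
      show False
      proof (rule shrink[of ?C])
        show "?C \<in> DSc e" using rem A by blast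
        show "?C \<subseteq> dec a" by blast
        show "?C \<noteq> dec a" using g by blast
        show "\<forall>p\<in>dec b - ?C. insert p ?C \<in> DSc e"
        proof
          fix p assume p: "p \<in> dec b - ?C"
          show "insert p ?C \<in> DSc e"
          proof (cases "p = gp e r")
            case True thus ?thesis using A g by (simp add: insert_absorb)
          next
            case False
            hence "insert p ?C = insert p (dec a) - {gp e r}" by auto
            thus ?thesis using H p False rem by auto
          qed
        qed
      qed
    qed
    define T where "T = {t. xp e t \<in> dec a}"
    have AT: "dec a = xp e ` T"
    proof
      show "xp e ` T \<subseteq> dec a" unfolding T_def by auto
      show "dec a \<subseteq> xp e ` T"
      proof
        fix q assume q: "q \<in> dec a"
        hence "q \<in> range (xp e) \<union> range (gp e)" using A by (auto simp: DSc_iff)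
        thus "q \<in> xp e ` T" using q nog unfolding T_def by auto
      qed
    qed
    have cov: "\<exists>r. t \<in> U r \<and> U r \<subseteq> T" if t: "t \<in> T" for t
    proof (rule ccontr)
      assume nc: "\<not> (\<exists>r. t \<in> U r \<and> U r \<subseteq> T)"
      let ?C = "dec a - {xp e t}"
      have nogC: "X \<subseteq> range (xp e) \<Longrightarrow> X \<in> DSc e" for X by (auto simp: DSc_iff)
      have Cx: "?C \<subseteq> range (xp e)" using AT by auto
      show False
      proof (rule shrink[of ?C])
        show "?C \<in> DSc e" using nogC Cx by blast
        show "?C \<subseteq> dec a" by blast
        show "?C \<noteq> dec a" using t T_def by auto
        show "\<forall>p\<in>dec b - ?C. insert p ?C \<in> DSc e"
        proof
          fix p assume p: "p \<in> dec b - ?C"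
          show "insert p ?C \<in> DSc e"
          proof (cases "p = xp e t")
            case True thus ?thesis using A t T_def by (simp add: insert_absorb)
          next
            case False
            hence pA: "p \<in> dec b - dec a" using p by auto
            hence ins: "insert p (dec a) \<in> DSc e" using H by blast
            have "p \<in> range (xp e) \<union> range (gp e)" using ins by (auto simp: DSc_iff)
            then consider u where "p = xp e u" | r where "p = gp e r" by blast
            thus ?thesis
            proof cases
              case 1 thus ?thesis using nogC Cx by auto
            next
              case 2
              have Ur: "U r \<subseteq> T"
              proof
                fix u assume "u \<in> U r"
                hence "\<not> r \<le> u" by (simp add: U_def)
                moreover have "gp e r \<in> insert p (dec a)" using 2 by simp
                ultimately have "xp e u \<in> insert p (dec a)" using ins unfolding DSc_iff by blast
                hence "xp e u \<in> dec a" using 2 by simp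
                thus "u \<in> T" using T_def by simp
              qed
              hence tn: "t \<notin> U r" using nc by blast
              show ?thesis unfolding DSc_iff
              proof (intro conjI allI impI)
                show "insert p ?C \<subseteq> range (xp e) \<union> range (gp e)" using Cx 2 by auto
                fix s u assume su: "gp e s \<in> insert p ?C \<and> \<not> s \<le> u"
                hence "s = r" using Cx 2 inj by auto
                hence "u \<in> U r" "u \<noteq> t" using su tn by (auto simp: U_def)
                thus "xp e u \<in> insert p ?C" using Ur T_def inj by auto
              qed
            qed
          qed
        qed
      qed
    qed
    define R where "R = {r. U r \<subseteq> T}"
    define m0 where "m0 = Inf_fin (UNIV :: 'a set)"
    have "U m0 = {}" unfolding U_def m0_def by (auto intro: Inf_fin.coboundedI)
    hence R0: "m0 \<in> R" unfolding R_def by simp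
    have finR: "finite R" by simp
    define m where "m = Sup_fin R"
    have Um: "U m = T"
    proof
      show "U m \<subseteq> T"
      proof
        fix t assume "t \<in> U m"
        hence "\<not> (\<forall>r\<in>R. r \<le> t)" unfolding U_def m_def using Sup_fin.bounded_iff[OF finR] R0 by auto
        then obtain r where "r \<in> R" "\<not> r \<le> t" by blast
        thus "t \<in> T" unfolding R_def U_def by auto
      qed
      show "T \<subseteq> U m"
      proof
        fix t assume "t \<in> T"
        then obtain r where r: "t \<in> U r" "U r \<subseteq> T" using cov by blast
        hence "r \<le> m" unfolding m_def R_def using finR by (auto intro: Sup_fin.coboundedI)
        thus "t \<in> U m" using r U_le by blast
      qed
    qed
    have "a = enc (dec a)" by simp
    also have "\<dots> = enc (xp e ` U m)" using AT Um by simp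
    finally show "a \<in> range (\<lambda>s. enc (xp e ` U s))" by blast
  next
    fix a assume "a \<in> range (\<lambda>s. enc (xp e ` U s))"
    then obtain s where as: "a = enc (xp e ` U s)" by blast
    define A where "A = xp e ` U s"
    define B where "B = range (xp e) \<union> gp e ` {r. U r \<subseteq> U s}"
    have ADS: "A \<in> DSc e" unfolding A_def by (auto simp: DSc_iff)
    have BDS: "B \<in> DSc e" unfolding B_def by (auto simp: DSc_iff)
    define b where "b = enc B"
    have aD: "a \<in> D" and bD: "b \<in> D" using ADS BDS as A_def b_def enc_inD by auto
    have da: "dec a = A" and db: "dec b = B" using ADS BDS as A_def b_def dec_enc by auto
    have AB: "A \<subseteq> B" unfolding A_def B_def by auto
    have At: "atomistic_interval D LE a b"
    proof -
      have "\<forall>p\<in>B - A. insert p A \<in> DSc e"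
      proof
        fix p assume p: "p \<in> B - A"
        show "insert p A \<in> DSc e" unfolding DSc_iff
        proof (intro conjI allI impI)
          show "insert p A \<subseteq> range (xp e) \<union> range (gp e)" using p unfolding A_def B_def by auto
          fix s' t assume st: "gp e s' \<in> insert p A \<and> \<not> s' \<le> t"
          hence "p = gp e s'" unfolding A_def by auto
          hence "U s' \<subseteq> U s" using p inj unfolding B_def by auto
          moreover have "t \<in> U s'" using st by (simp add: U_def)
          ultimately show "xp e t \<in> insert p A" unfolding A_def by auto
        qed
      qed
      thus ?thesis using atom_char[OF aD bD] da db AB by simp
    qed
    have "maximal_atomistic_interval D LE a b"
      unfolding maximal_atomistic_interval_def
    proof (intro conjI allI impI At)
      fix c d assume cd: "atomistic_interval D LE c d \<and> interval_on D LE a b \<subseteq> interval_on D LE c d"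
      have "a \<in> interval_on D LE a b" "b \<in> interval_on D LE a b" using aD bD da db AB by (auto simp: interval_iff)
      hence ai: "a \<in> interval_on D LE c d" and bi: "b \<in> interval_on D LE c d" using cd by auto
      have cD: "c \<in> D" and dD: "d \<in> D" and cdle: "dec c \<subseteq> dec d"
        using cd unfolding atomistic_interval_def LE_def by auto
      have Hc: "\<forall>p\<in>dec d - dec c. insert p (dec c) \<in> DSc e" using atom_char[OF cD dD cdle] cd by blast
      have cA: "dec c \<subseteq> A" and Bd: "B \<subseteq> dec d" using ai bi da db by (auto simp: interval_iff)
      have gs: "gp e s \<in> B" unfolding B_def by auto
      have gsc: "gp e s \<notin> dec c" using cA unfolding A_def by auto
      have "A \<subseteq> dec c"
      proof
        fix q assume "q \<in> A"
        then obtain t where t: "q = xp e t" "t \<in> U s" unfolding A_def by auto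
        show "q \<in> dec c"
        proof (rule ccontr)
          assume "q \<notin> dec c"
          have "insert (gp e s) (dec c) \<in> DSc e" using Hc gs Bd gsc by blast
          hence "xp e t \<in> insert (gp e s) (dec c)" using t by (auto simp: DSc_iff U_def)
          thus False using t \<open>q \<notin> dec c\<close> by auto
        qed
      qed
      hence dcA: "dec c = A" using cA by blast
      have "dec d \<subseteq> B"
      proof
        fix q assume q: "q \<in> dec d"
        have "dec d \<in> DSc e" using dD inD by blast
        hence "q \<in> range (xp e) \<union> range (gp e)" using q by (auto simp: DSc_iff)
        then consider t where "q = xp e t" | r where "q = gp e r" by blast
        thus "q \<in> B"
        proof cases
          case 1 thus ?thesis unfolding B_def by auto
        next
          case 2
          have "q \<notin> dec c" using dcA 2 unfolding A_def by auto
          hence I: "insert q (dec c) \<in> DSc e" using Hc q by blast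
          have "U r \<subseteq> U s"
          proof
            fix t assume "t \<in> U r"
            hence "\<not> r \<le> t" by (simp add: U_def)
            hence "xp e t \<in> insert q (dec c)" using I 2 unfolding DSc_iff by blast
            hence "xp e t \<in> A" using 2 dcA by simp
            thus "t \<in> U s" using inj unfolding A_def by auto
          qed
          thus ?thesis using 2 unfolding B_def by auto
        qed
      qed
      hence "dec d = B" using Bd by blast
      hence "c = a" "d = b" using dcA da db dec_inj by auto
      thus "interval_on D LE a b = interval_on D LE c d" by simp
    qed
    thus "a \<in> skeleton D LE" unfolding skeleton_def by blast
  qed
qed

theorem theorem7p2:
  fixes S_witness :: "'a :: {finite, lattice} itself"
  shows "\<exists>(D :: nat set) (le :: nat \<Rightarrow> nat \<Rightarrow> bool) (f :: 'a \<Rightarrow> nat).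
           finite D \<and> distributive_lattice_on D le \<and>
           bij_betw f (UNIV :: 'a set) (skeleton D le) \<and>
           (\<forall>x y. x \<le> y \<longleftrightarrow> le (f x) (f y))"
proof -
  obtain e :: "'a \<Rightarrow> nat" and n where "e ` UNIV = {i. i < n}" "inj e"
    using finite_imp_inj_to_nat_seg[OF finite_UNIV] by blast
  note inj = \<open>inj e\<close>
  interpret dsfam "DSc e" by (rule dsfam_DSc)
  define f where "f = (\<lambda>s::'a. enc (xp e ` U s))"
  have finxp: "finite (xp e ` U s)" for s by simp
  have df: "dec (f s) = xp e ` U s" for s unfolding f_def using finxp by simp
  have ord: "x \<le> y \<longleftrightarrow> LE (f x) (f y)" for x y
  proof -
    have "LE (f x) (f y) \<longleftrightarrow> xp e ` U x \<subseteq> xp e ` U y" by (simp add: LE_def df)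
    also have "\<dots> \<longleftrightarrow> U x \<subseteq> U y" using inj by auto
    finally show ?thesis using U_le by blast
  qed
  have "inj f"
  proof
    fix x y assume "f x = f y"
    hence "LE (f x) (f y)" "LE (f y) (f x)" by (auto simp: LE_def)
    thus "x = y" using ord antisym by blast
  qed
  moreover have "range f = skeleton D LE" using key[OF inj] unfolding f_def by simp
  ultimately have "bij_betw f UNIV (skeleton D LE)" by (simp add: bij_betw_def)
  thus ?thesis using finD distrib ord by blast
qed

end
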